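(* Let $A$ be a semiprime algebra whose commutator is commutative and distributive w.r.t. arbitrary joins. Then for every $\theta\in\mathrm{Con}(A)$, $\theta^\perp=\bigcap\big(V_A(\theta^\perp)\cap\mathrm{Min}(A)\big)$ (with the intersection of the empty family being $\nabla_A$).
   Context: Let $A$ be an algebra of a fixed signature. $\mathrm{Con}(A)$ is the complete lattice of congruences of $A$, with bottom $\Delta_A=\{(a,a):a\in A\}$ and top $\nabla_A=A^2$. For $\alpha,\beta,\mu\in\mathrm{Con}(A)$, write $C(\alpha,\beta;\mu)$ if for all $n,k\in\mathbb N$, every term $t$ of arity $n+k$, all $(a_i,b_i)\in\alpha$ ($1\le i\le n$) and all $(c_j,d_j)\in\beta$ ($1\le j\le k$): $(t^A(a_1,\dots,a_n,c_1,\dots,c_k),t^A(a_1,\dots,a_n,d_1,\dots,d_k))\in\mu$ iff $(t^A(b_1,\dots,b_n,c_1,\dots,c_k),t^A(b_1,\dots,b_n,d_1,\dots,d_k))\in\mu$. The (term condition) commutator is $[\alpha,\beta]_A=\bigcap\{\mu\in\mathrm{Con}(A): C(\alpha,\beta;\mu)\}$; it satisfies $[\alpha,\beta]_A\subseteq\alpha\cap\beta$ and is monotone in each argument. "The commutator of $A$ is commutative and distributive w.r.t. arbitrary joins" means $[\alpha,\beta]_A=[\beta,\alpha]_A$ and $[\bigvee_{i\in I}\alpha_i,\beta]_A=\bigvee_{i\in I}[\alpha_i,\beta]_A$ for all $\alpha,\beta$ and all families $(\alpha_i)_{i\in I}$ in $\mathrm{Con}(A)$. A congruence $\phi\neq\nabla_A$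 is prime if for all $\alpha,\beta\in\mathrm{Con}(A)$, $[\alpha,\beta]_A\subseteq\phi$ implies $\alpha\subseteq\phi$ or $\beta\subseteq\phi$; $\mathrm{Spec}(A)$ is the set of prime congruences and $\mathrm{Min}(A)$ the set of minimal elements of $(\mathrm{Spec}(A),\subseteq)$. For $\theta\in\mathrm{Con}(A)$: $V_A(\theta)=\{\phi\in\mathrm{Spec}(A):\theta\subseteq\phi\}$ and $\rho_A(\theta)=\bigcap V_A(\theta)$ (the intersection of the empty family being $\nabla_A$). $A$ is semiprime if $\rho_A(\Delta_A)=\Delta_A$. For $\beta,\gamma\in\mathrm{Con}(A)$: $\beta\to\gamma=\bigvee\{\alpha\in\mathrm{Con}(A):[\alpha,\beta]_A\subseteq\gamma\}$ and $\beta^\perp=\beta\to\Delta_A$. *)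

theory Defs
  imports Main
begin

text \<open>An algebra of a fixed signature: function symbols of type 'f with arity
  function ar, interpreted by ops on the carrier UNIV :: 'a set.\<close>

datatype 'f trm = Var nat | App 'f "'f trm list"

fun wf_trm :: "('f \<Rightarrow> nat) \<Rightarrow> 'f trm \<Rightarrow> bool" where
  "wf_trm ar (Var i) = True"
| "wf_trm ar (App f ts) = (length ts = ar f \<and> (\<forall>t\<in>set ts. wf_trm ar t))"

fun vars_trm :: "'f trm \<Rightarrow> nat set" where
  "vars_trm (Var i) = {i}"
| "vars_trm (App f ts) = (\<Union>t\<in>set ts. vars_trm t)"

fun eval_trm :: "('f \<Rightarrow> 'a list \<Rightarrow> 'a) \<Rightarrow> (nat \<Rightarrow> 'a) \<Rightarrow> 'f trm \<Rightarrow> 'a" where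
  "eval_trm ops x (Var i) = x i"
| "eval_trm ops x (App f ts) = ops f (map (eval_trm ops x) ts)"

definition is_term :: "('f \<Rightarrow> nat) \<Rightarrow> nat \<Rightarrow> 'f trm \<Rightarrow> bool" where
  "is_term ar m t \<longleftrightarrow> wf_trm ar t \<and> vars_trm t \<subseteq> {..<m}"

definition is_con :: "('f \<Rightarrow> nat) \<Rightarrow> ('f \<Rightarrow> 'a list \<Rightarrow> 'a) \<Rightarrow> 'a rel \<Rightarrow> bool" where
  "is_con ar ops \<theta> \<longleftrightarrow> equiv UNIV \<theta> \<and>
     (\<forall>f xs ys. length xs = ar f \<longrightarrow> length ys = ar f \<longrightarrow>
        (\<forall>i<ar f. (xs ! i, ys ! i) \<in> \<theta>) \<longrightarrow> (ops f xs, ops f ys) \<in> \<theta>)"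

definition Con :: "('f \<Rightarrow> nat) \<Rightarrow> ('f \<Rightarrow> 'a list \<Rightarrow> 'a) \<Rightarrow> 'a rel set" where
  "Con ar ops = {\<theta>. is_con ar ops \<theta>}"

definition con_join :: "('f \<Rightarrow> nat) \<Rightarrow> ('f \<Rightarrow> 'a list \<Rightarrow> 'a) \<Rightarrow> 'a rel set \<Rightarrow> 'a rel" where
  "con_join ar ops S = \<Inter>{\<theta> \<in> Con ar ops. \<Union>S \<subseteq> \<theta>}"

text \<open>the assignment (a_1..a_n, c_1..c_k) as a function on variable indices\<close>
definition asg :: "nat \<Rightarrow> (nat \<Rightarrow> 'a) \<Rightarrow> (nat \<Rightarrow> 'a) \<Rightarrow> nat \<Rightarrow> 'a" where
  "asg n a c i = (if i < n then a i else c (i - n))"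

definition centralizes :: "('f \<Rightarrow> nat) \<Rightarrow> ('f \<Rightarrow> 'a list \<Rightarrow> 'a) \<Rightarrow> 'a rel \<Rightarrow> 'a rel \<Rightarrow> 'a rel \<Rightarrow> bool" where
  "centralizes ar ops \<alpha> \<beta> \<mu> \<longleftrightarrow>
     (\<forall>n k t a b c d. is_term ar (n + k) t \<longrightarrow>
        (\<forall>i<n. (a i, b i) \<in> \<alpha>) \<longrightarrow> (\<forall>j<k. (c j, d j) \<in> \<beta>) \<longrightarrow>
        ((eval_trm ops (asg n a c) t, eval_trm ops (asg n a d) t) \<in> \<mu> \<longleftrightarrow>
         (eval_trm ops (asg n b c) t, eval_trm ops (asg n b d) t) \<in> \<mu>))"

definition comm :: "('f \<Rightarrow> nat) \<Rightarrow> ('f \<Rightarrow> 'a list \<Rightarrow> 'a) \<Rightarrow> 'a rel \<Rightarrow> 'a rel \<Rightarrow> 'a rel" where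
  "comm ar ops \<alpha> \<beta> = \<Inter>{\<mu> \<in> Con ar ops. centralizes ar ops \<alpha> \<beta> \<mu>}"

definition is_prime :: "('f \<Rightarrow> nat) \<Rightarrow> ('f \<Rightarrow> 'a list \<Rightarrow> 'a) \<Rightarrow> 'a rel \<Rightarrow> bool" where
  "is_prime ar ops \<phi> \<longleftrightarrow> \<phi> \<in> Con ar ops \<and> \<phi> \<noteq> UNIV \<and>
     (\<forall>\<alpha>\<in>Con ar ops. \<forall>\<beta>\<in>Con ar ops. comm ar ops \<alpha> \<beta> \<subseteq> \<phi> \<longrightarrow> \<alpha> \<subseteq> \<phi> \<or> \<beta> \<subseteq> \<phi>)"

definition Spec :: "('f \<Rightarrow> nat) \<Rightarrow> ('f \<Rightarrow> 'a list \<Rightarrow> 'a) \<Rightarrow> 'a rel set" where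
  "Spec ar ops = {\<phi>. is_prime ar ops \<phi>}"

definition MinSpec :: "('f \<Rightarrow> nat) \<Rightarrow> ('f \<Rightarrow> 'a list \<Rightarrow> 'a) \<Rightarrow> 'a rel set" where
  "MinSpec ar ops = {\<phi> \<in> Spec ar ops. \<forall>\<psi>\<in>Spec ar ops. \<psi> \<subseteq> \<phi> \<longrightarrow> \<psi> = \<phi>}"

definition V :: "('f \<Rightarrow> nat) \<Rightarrow> ('f \<Rightarrow> 'a list \<Rightarrow> 'a) \<Rightarrow> 'a rel \<Rightarrow> 'a rel set" where
  "V ar ops \<theta> = {\<phi> \<in> Spec ar ops. \<theta> \<subseteq> \<phi>}"

text \<open>HOL's intersection of the empty family is UNIV = nabla\<close>
definition rad :: "('f \<Rightarrow> nat) \<Rightarrow> ('f \<Rightarrow> 'a list \<Rightarrow> 'a) \<Rightarrow> 'a rel \<Rightarrow> 'a rel" where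
  "rad ar ops \<theta> = \<Inter>(V ar ops \<theta>)"

definition semiprime :: "('f \<Rightarrow> nat) \<Rightarrow> ('f \<Rightarrow> 'a list \<Rightarrow> 'a) \<Rightarrow> bool" where
  "semiprime ar ops \<longleftrightarrow> rad ar ops Id = Id"

definition rimp :: "('f \<Rightarrow> nat) \<Rightarrow> ('f \<Rightarrow> 'a list \<Rightarrow> 'a) \<Rightarrow> 'a rel \<Rightarrow> 'a rel \<Rightarrow> 'a rel" where
  "rimp ar ops \<beta> \<gamma> = con_join ar ops {\<alpha> \<in> Con ar ops. comm ar ops \<alpha> \<beta> \<subseteq> \<gamma>}"

definition perp :: "('f \<Rightarrow> nat) \<Rightarrow> ('f \<Rightarrow> 'a list \<Rightarrow> 'a) \<Rightarrow> 'a rel \<Rightarrow> 'a rel" where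
  "perp ar ops \<beta> = rimp ar ops \<beta> Id"

end

theory Submission
  imports Defs
begin

lemma Inter_Con:
  assumes "S \<subseteq> Con ar ops"
  shows "\<Inter>S \<in> Con ar ops"
proof -
  have e: "\<And>\<mu>. \<mu> \<in> S \<Longrightarrow> equiv UNIV \<mu>" and
    c: "\<And>\<mu> f xs ys. \<mu> \<in> S \<Longrightarrow> length xs = ar f \<Longrightarrow> length ys = ar f \<Longrightarrow>
        (\<forall>i<ar f. (xs ! i, ys ! i) \<in> \<mu>) \<Longrightarrow> (ops f xs, ops f ys) \<in> \<mu>"
    using assms by (auto simp: Con_def is_con_def)
  have "equiv UNIV (\<Inter>S)"
    unfolding equiv_def refl_on_def sym_def trans_def
  proof (intro conjI)
    show "\<Inter>S \<subseteq> UNIV \<times> UNIV" by simp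
    show "\<forall>x\<in>UNIV. (x, x) \<in> \<Inter>S" using e by (auto simp: equiv_def refl_on_def)
    show "\<forall>x y. (x, y) \<in> \<Inter>S \<longrightarrow> (y, x) \<in> \<Inter>S" using e by (auto simp: equiv_def sym_def)
    show "\<forall>x y z. (x, y) \<in> \<Inter>S \<longrightarrow> (y, z) \<in> \<Inter>S \<longrightarrow> (x, z) \<in> \<Inter>S"
      using e unfolding equiv_def trans_def by blast
  qed
  moreover have "\<forall>f xs ys. length xs = ar f \<longrightarrow> length ys = ar f \<longrightarrow>
        (\<forall>i<ar f. (xs ! i, ys ! i) \<in> \<Inter>S) \<longrightarrow> (ops f xs, ops f ys) \<in> \<Inter>S"
    using c by blast
  ultimately show ?thesis by (simp add: Con_def is_con_def)
qed

lemma Id_Con: "Id \<in> Con ar ops"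
  by (simp add: Con_def is_con_def equiv_def refl_on_def sym_def trans_def) (metis nth_equalityI)

lemma con_join_Con: "con_join ar ops S \<in> Con ar ops"
  unfolding con_join_def by (rule Inter_Con) blast

lemma con_join_upper: "\<alpha> \<in> S \<Longrightarrow> \<alpha> \<subseteq> con_join ar ops S"
  unfolding con_join_def by blast

lemma con_join_least: "\<theta> \<in> Con ar ops \<Longrightarrow> \<Union>S \<subseteq> \<theta> \<Longrightarrow> con_join ar ops S \<subseteq> \<theta>"
  unfolding con_join_def by blast

lemma compat:
  assumes b: "\<beta> \<in> Con ar ops"
  shows "wf_trm ar t \<Longrightarrow> (\<forall>i\<in>vars_trm t. (x i, y i) \<in> \<beta>) \<Longrightarrow>
     (eval_trm ops x t, eval_trm ops y t) \<in> \<beta>"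
proof (induction t)
  case (Var i)
  then show ?case by simp
next
  case (App f ts)
  have c: "\<And>f xs ys. length xs = ar f \<Longrightarrow> length ys = ar f \<Longrightarrow>
        (\<forall>i<ar f. (xs ! i, ys ! i) \<in> \<beta>) \<Longrightarrow> (ops f xs, ops f ys) \<in> \<beta>"
    using b by (auto simp: Con_def is_con_def)
  have len: "length ts = ar f" using App.prems by simp
  have "\<forall>i<ar f. (map (eval_trm ops x) ts ! i, map (eval_trm ops y) ts ! i) \<in> \<beta>"
  proof (intro allI impI)
    fix i assume "i < ar f"
    hence ti: "ts ! i \<in> set ts" using len by simp
    have "(eval_trm ops x (ts ! i), eval_trm ops y (ts ! i)) \<in> \<beta>"
      using App.IH[OF ti] App.prems ti by auto
    thus "(map (eval_trm ops x) ts ! i, map (eval_trm ops y) ts ! i) \<in> \<beta>"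
      using \<open>i < ar f\<close> len by simp
  qed
  thus ?case using c[of "map (eval_trm ops x) ts" f "map (eval_trm ops y) ts"] len by simp
qed

lemma centralizes_right:
  assumes b: "\<beta> \<in> Con ar ops"
  shows "centralizes ar ops \<alpha> \<beta> \<beta>"
proof -
  have refl: "\<And>z. (z, z) \<in> \<beta>" using b by (auto simp: Con_def is_con_def equiv_def refl_on_def)
  have key: "\<And>n k t a c d. is_term ar (n + k) t \<Longrightarrow> (\<forall>j<k. (c j, d j) \<in> \<beta>) \<Longrightarrow>
      (eval_trm ops (asg n a c) t, eval_trm ops (asg n a d) t) \<in> \<beta>"
  proof -
    fix n k t a c d
    assume t: "is_term ar (n + k) t" and cd: "\<forall>j<k. (c j, d j) \<in> \<beta>"
    have "\<forall>i\<in>vars_trm t. (asg n a c i, asg n a d i) \<in> \<beta>"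
    proof
      fix i assume "i \<in> vars_trm t"
      hence "i < n + k" using t by (auto simp: is_term_def)
      thus "(asg n a c i, asg n a d i) \<in> \<beta>" using cd refl by (auto simp: asg_def)
    qed
    thus "(eval_trm ops (asg n a c) t, eval_trm ops (asg n a d) t) \<in> \<beta>"
      using compat[OF b] t by (auto simp: is_term_def)
  qed
  show ?thesis unfolding centralizes_def using key by blast
qed

lemma comm_le_right: "\<beta> \<in> Con ar ops \<Longrightarrow> comm ar ops \<alpha> \<beta> \<subseteq> \<beta>"
  unfolding comm_def using centralizes_right by blast

lemma chain_prime:
  assumes C: "C \<subseteq> Spec ar ops" "C \<noteq> {}" and ch: "\<forall>a\<in>C. \<forall>b\<in>C. a \<subseteq> b \<or> b \<subseteq> a"
  shows "\<Inter>C \<in> Spec ar ops"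
proof -
  have CC: "C \<subseteq> Con ar ops" using C by (auto simp: Spec_def is_prime_def)
  have "\<Inter>C \<in> Con ar ops" using Inter_Con[OF CC] .
  moreover have "\<Inter>C \<noteq> UNIV"
  proof
    assume u: "\<Inter>C = UNIV"
    obtain c where "c \<in> C" using C by blast
    hence "c = UNIV" using u by blast
    thus False using \<open>c \<in> C\<close> C by (auto simp: Spec_def is_prime_def)
  qed
  moreover have "\<forall>\<alpha>\<in>Con ar ops. \<forall>\<beta>\<in>Con ar ops. comm ar ops \<alpha> \<beta> \<subseteq> \<Inter>C \<longrightarrow> \<alpha> \<subseteq> \<Inter>C \<or> \<beta> \<subseteq> \<Inter>C"
  proof (intro ballI impI)
    fix \<alpha> \<beta> assume a: "\<alpha> \<in> Con ar ops" and b: "\<beta> \<in> Con ar ops" and cm: "comm ar ops \<alpha> \<beta> \<subseteq> \<Inter>C"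
    show "\<alpha> \<subseteq> \<Inter>C \<or> \<beta> \<subseteq> \<Inter>C"
    proof (rule ccontr)
      assume "\<not> (\<alpha> \<subseteq> \<Inter>C \<or> \<beta> \<subseteq> \<Inter>C)"
      then obtain c1 c2 where c1: "c1 \<in> C" "\<not> \<alpha> \<subseteq> c1" and c2: "c2 \<in> C" "\<not> \<beta> \<subseteq> c2" by blast
      have pr: "\<And>c. c \<in> C \<Longrightarrow> comm ar ops \<alpha> \<beta> \<subseteq> c \<Longrightarrow> \<alpha> \<subseteq> c \<or> \<beta> \<subseteq> c"
      proof -
        fix c assume "c \<in> C" "comm ar ops \<alpha> \<beta> \<subseteq> c"
        hence "is_prime ar ops c" using C(1) by (auto simp: Spec_def)
        thus "\<alpha> \<subseteq> c \<or> \<beta> \<subseteq> c" using a b \<open>comm ar ops \<alpha> \<beta> \<subseteq> c\<close> unfolding is_prime_def by blast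
      qed
      from ch c1 c2 have "c1 \<subseteq> c2 \<or> c2 \<subseteq> c1" by blast
      thus False
      proof
        assume "c1 \<subseteq> c2"
        thus False using pr[OF c1(1)] cm c1 c2 by blast
      next
        assume "c2 \<subseteq> c1"
        thus False using pr[OF c2(1)] cm c1 c2 by blast
      qed
    qed
  qed
  ultimately show ?thesis by (simp add: Spec_def is_prime_def)
qed

lemma exists_min_prime:
  assumes phi: "\<phi> \<in> Spec ar ops"
  shows "\<exists>\<psi>\<in>MinSpec ar ops. \<psi> \<subseteq> \<phi>"
proof -
  define A where "A = {\<psi> \<in> Spec ar ops. \<psi> \<subseteq> \<phi>}"
  define B where "B = uminus ` A"
  have "\<forall>C\<in>chains B. \<exists>U\<in>B. \<forall>X\<in>C. X \<subseteq> U"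
  proof
    fix C assume "C \<in> chains B"
    hence CB: "C \<subseteq> B" and ch: "\<forall>a\<in>C. \<forall>b\<in>C. a \<subseteq> b \<or> b \<subseteq> a"
      by (auto simp: chains_def chain_subset_def)
    show "\<exists>U\<in>B. \<forall>X\<in>C. X \<subseteq> U"
    proof (cases "C = {}")
      case True
      have "-\<phi> \<in> B" using phi by (auto simp: A_def B_def)
      thus ?thesis using True by blast
    next
      case False
      define D where "D = uminus ` C"
      have DA: "D \<subseteq> A" using CB by (auto simp: D_def B_def)
      have "\<Inter>D \<in> Spec ar ops"
        apply (rule chain_prime)
        using DA False ch by (auto simp: A_def D_def)
      moreover have "\<Inter>D \<subseteq> \<phi>" using DA False by (auto simp: A_def D_def)
      ultimately have "-(\<Inter>D) \<in> B" unfolding B_def A_def by blast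
      moreover have "\<forall>X\<in>C. X \<subseteq> -(\<Inter>D)" by (auto simp: D_def)
      ultimately show ?thesis by blast
    qed
  qed
  from Zorn_Lemma2[OF this] obtain M where M: "M \<in> B" and mx: "\<forall>X\<in>B. M \<subseteq> X \<longrightarrow> X = M" by blast
  from M obtain \<psi> where psi: "\<psi> \<in> A" "M = -\<psi>" by (auto simp: B_def)
  have "\<psi> \<in> MinSpec ar ops"
    unfolding MinSpec_def
  proof (intro CollectI conjI ballI impI)
    show "\<psi> \<in> Spec ar ops" using psi by (simp add: A_def)
    fix \<psi>' assume s: "\<psi>' \<in> Spec ar ops" and le: "\<psi>' \<subseteq> \<psi>"
    have "-\<psi>' \<in> B" using s le psi by (auto simp: A_def B_def)
    moreover have "M \<subseteq> -\<psi>'" using le psi by auto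
    ultimately have "-\<psi>' = -\<psi>" using mx psi by blast
    thus "\<psi>' = \<psi>" by simp
  qed
  thus ?thesis using psi by (auto simp: A_def)
qed

theorem mainTheorem9:
  fixes ar :: "'f \<Rightarrow> nat" and ops :: "'f \<Rightarrow> 'a list \<Rightarrow> 'a" and \<theta> :: "'a rel"
  assumes semi: "semiprime ar ops"
    and comm_sym: "\<forall>\<alpha>\<in>Con ar ops. \<forall>\<beta>\<in>Con ar ops. comm ar ops \<alpha> \<beta> = comm ar ops \<beta> \<alpha>"
    and comm_distrib: "\<forall>S \<subseteq> Con ar ops. \<forall>\<beta>\<in>Con ar ops.
          comm ar ops (con_join ar ops S) \<beta> = con_join ar ops ((\<lambda>\<alpha>. comm ar ops \<alpha> \<beta>) ` S)"
    and theta: "\<theta> \<in> Con ar ops"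
  shows "perp ar ops \<theta> = \<Inter>(V ar ops (perp ar ops \<theta>) \<inter> MinSpec ar ops)"
proof
  define P where "P = perp ar ops \<theta>"
  define S where "S = {\<alpha> \<in> Con ar ops. comm ar ops \<alpha> \<theta> \<subseteq> Id}"
  have PS: "P = con_join ar ops S" by (simp add: P_def S_def perp_def rimp_def)
  have PC: "P \<in> Con ar ops" using PS con_join_Con by simp
  show "perp ar ops \<theta> \<subseteq> \<Inter>(V ar ops (perp ar ops \<theta>) \<inter> MinSpec ar ops)"
    by (auto simp: V_def)
  have "comm ar ops P \<theta> = con_join ar ops ((\<lambda>\<alpha>. comm ar ops \<alpha> \<theta>) ` S)"
    using comm_distrib theta PS by (auto simp: S_def)
  also have "\<dots> \<subseteq> Id" by (rule con_join_least[OF Id_Con]) (auto simp: S_def)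
  finally have cP: "comm ar ops \<theta> P \<subseteq> Id" using comm_sym theta PC by auto
  define X where "X = \<Inter>(V ar ops P \<inter> MinSpec ar ops)"
  have XC: "X \<in> Con ar ops" unfolding X_def
    by (rule Inter_Con) (auto simp: V_def Spec_def is_prime_def)
  have "comm ar ops X \<theta> \<subseteq> \<phi>" if phi: "\<phi> \<in> Spec ar ops" for \<phi>
  proof -
    obtain \<psi> where psi: "\<psi> \<in> MinSpec ar ops" "\<psi> \<subseteq> \<phi>" using exists_min_prime[OF phi] by blast
    have psiS: "\<psi> \<in> Spec ar ops" using psi by (simp add: MinSpec_def)
    have IdC: "Id \<subseteq> \<psi>" using psiS
      by (auto simp: Spec_def is_prime_def Con_def is_con_def equiv_def refl_on_def)
    have "\<theta> \<subseteq> \<psi> \<or> P \<subseteq> \<psi>" using psiS cP IdC theta PC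
      by (auto simp: Spec_def is_prime_def)
    thus ?thesis
    proof
      assume "\<theta> \<subseteq> \<psi>"
      thus ?thesis using comm_le_right[OF theta, of X] psi by blast
    next
      assume "P \<subseteq> \<psi>"
      hence "X \<subseteq> \<psi>" using psi psiS by (auto simp: X_def V_def)
      moreover have "comm ar ops X \<theta> = comm ar ops \<theta> X" using comm_sym XC theta by blast
      ultimately show ?thesis using comm_le_right[OF XC, of \<theta>] psi by blast
    qed
  qed
  hence "comm ar ops X \<theta> \<subseteq> rad ar ops Id" by (auto simp: rad_def V_def)
  hence "X \<in> S" using semi XC by (simp add: semiprime_def S_def)
  hence "X \<subseteq> P" using PS con_join_upper by blast
  thus "\<Inter>(V ar ops (perp ar ops \<theta>) \<inter> MinSpec ar ops) \<subseteq> perp ar ops \<theta>"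
    by (simp add: X_def P_def)
qed

end
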